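(* (Dissection Theorem.) As formal power series in $q$ (equivalently, as analytic functions for $|q|<1$), \[ \frac{(-q;q^2)_\infty}{(q^4;q^4)_\infty\,(-q^2;q^4)_\infty^{2}} = F_0(-q^2) + q\,F_1(-q^2), \] where for $i=0,1$ \[ F_i(q) = \frac{1}{(q;q)_\infty}\cdot\frac{1}{(q^{1+2i};q^8)_\infty\,(q^2;q^8)_\infty\,(q^4;q^8)_\infty\,(q^6;q^8)_\infty\,(q^{7-2i};q^8)_\infty}. \]
   Context: Here $(a;q)_\infty=\prod_{j\ge0}(1-aq^j)$. *)

theory Defs
  imports "HOL-Analysis.Analysis"
begin

definition qpoch :: "complex \<Rightarrow> complex \<Rightarrow> complex" where
  "qpoch a q = (\<Prod>j. 1 - a * q ^ j)"

definition Fdis :: "nat \<Rightarrow> complex \<Rightarrow> complex" where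
  "Fdis i q = 1 / qpoch q q *
     (1 / (qpoch (q ^ (1 + 2 * i)) (q ^ 8) * qpoch (q ^ 2) (q ^ 8) * qpoch (q ^ 4) (q ^ 8)
           * qpoch (q ^ 6) (q ^ 8) * qpoch (q ^ (7 - 2 * i)) (q ^ 8)))"

end

theory Submission
  imports Defs
begin


lemma qpoch_cprod:
  fixes a q :: complex assumes "norm q < 1"
  shows "convergent_prod (\<lambda>j. 1 - a * q ^ j)"
proof -
  have "summable (\<lambda>j. norm a * norm q ^ j)"
    using assms by (intro summable_mult summable_geometric) auto
  hence "summable (\<lambda>j. norm ((1 - a * q ^ j) - 1))"
    by (simp add: norm_mult norm_power)
  thus ?thesis
    by (intro abs_convergent_prod_imp_convergent_prod summable_imp_abs_convergent_prod)
qed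

lemma qpoch_lim:
  fixes a q :: complex assumes "norm q < 1"
  shows "(\<lambda>n. \<Prod>j<n. 1 - a * q ^ j) \<longlonglongrightarrow> qpoch a q"
proof -
  have "(\<lambda>n. \<Prod>j\<le>n. 1 - a * q ^ j) \<longlonglongrightarrow> qpoch a q"
    unfolding qpoch_def by (rule convergent_prod_LIMSEQ[OF qpoch_cprod[OF assms]])
  hence "(\<lambda>n. \<Prod>j<Suc n. 1 - a * q ^ j) \<longlonglongrightarrow> qpoch a q"
    by (simp add: lessThan_Suc_atMost)
  thus ?thesis by (rule LIMSEQ_imp_Suc)
qed

lemma qpoch_nonzero:
  fixes a q :: complex assumes "norm q < 1" "norm a < 1"
  shows "qpoch a q \<noteq> 0"
  unfolding qpoch_def
proof (rule prodinf_nonzero[OF qpoch_cprod[OF assms(1)]])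
  fix i
  have "norm (a * q ^ i) \<le> norm a" using assms
    by (simp add: norm_mult norm_power mult_left_le power_le_one)
  hence "norm (a * q ^ i) < 1" using assms by simp
  thus "1 - a * q ^ i \<noteq> 0" by auto
qed

lemma prod_split_mult:
  fixes f :: "nat \<Rightarrow> complex" assumes "m > 0"
  shows "(\<Prod>j<m*n. f j) = (\<Prod>k<n. \<Prod>r<m. f (m*k + r))"
proof (induction n)
  case 0 then show ?case by simp
next
  case (Suc n)
  have "(\<Prod>j<m*Suc n. f j) = (\<Prod>j<m*n. f j) * (\<Prod>j\<in>{m*n..<m*n+m}. f j)"
    by (simp add: lessThan_atLeast0 prod.atLeastLessThan_concat add.commute)
  also have "(\<Prod>j\<in>{m*n..<m*n+m}. f j) = (\<Prod>r<m. f (m*n + r))"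
    by (simp add: prod.shift_bounds_nat_ivl[symmetric] atLeast0LessThan[symmetric] add.commute)
  finally show ?case using Suc by simp
qed

lemma lim_split:
  fixes f :: "nat \<Rightarrow> complex" assumes "m > 0"
  and "(\<lambda>n. \<Prod>j<n. f j) \<longlonglongrightarrow> A"
  and "(\<lambda>n. \<Prod>k<n. \<Prod>r<m. f (m*k + r)) \<longlonglongrightarrow> B"
  shows "A = B"
proof -
  have "strict_mono (\<lambda>n. m * n)" using assms(1) by (intro strict_monoI) auto
  from LIMSEQ_subseq_LIMSEQ[OF assms(2) this]
  have "(\<lambda>n. \<Prod>j<m*n. f j) \<longlonglongrightarrow> A" by (simp add: o_def)
  hence "(\<lambda>n. \<Prod>k<n. \<Prod>r<m. f (m*k + r)) \<longlonglongrightarrow> A"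
    by (simp add: prod_split_mult[OF assms(1)])
  thus ?thesis using assms(3) LIMSEQ_unique by blast
qed

lemma pow_swap: "((x::complex)^n)^k = (x^k)^n"
  by (simp add: power_mult[symmetric] mult.commute)

lemma qpoch_split2:
  fixes a q :: complex assumes "norm q < 1"
  shows "qpoch a q = qpoch a (q^2) * qpoch (a*q) (q^2)"
proof (rule lim_split[of 2, OF _ qpoch_lim[OF assms]])
  have q2: "norm (q^2) < 1" using assms by (simp add: norm_power power_less_one_iff)
  let ?L = "(\<lambda>n. (\<Prod>k<n. 1 - a * (q^2)^k) * (\<Prod>k<n. 1 - (a*q) * (q^2)^k))"
  have "?L \<longlonglongrightarrow> qpoch a (q^2) * qpoch (a*q) (q^2)"
    by (intro tendsto_mult qpoch_lim q2)
  show "(\<lambda>n. \<Prod>k<n. \<Prod>r<2. 1 - a * q ^ (2*k+r)) \<longlonglongrightarrow> qpoch a (q^2) * qpoch (a*q) (q^2)"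
  proof -
    have "\<And>k. (\<Prod>r<2. 1 - a * q ^ (2*k+r)) = (1 - a * (q^2)^k) * (1 - (a*q) * (q^2)^k)"
    proof -
      fix k
      have "{..<2::nat} = {0,1}" by auto
      thus "(\<Prod>r<2. 1 - a * q ^ (2*k+r)) = (1 - a * (q^2)^k) * (1 - (a*q) * (q^2)^k)"
        by (simp add: power_add power_mult mult_ac pow_swap[of q 2 k])
    qed
    thus ?thesis using \<open>?L \<longlonglongrightarrow> _\<close> by (simp add: prod.distrib)
  qed
qed simp

lemma qpoch_split4:
  fixes a q :: complex assumes "norm q < 1"
  shows "qpoch a q = qpoch a (q^4) * qpoch (a*q) (q^4) * qpoch (a*q^2) (q^4) * qpoch (a*q^3) (q^4)"
proof (rule lim_split[of 4, OF _ qpoch_lim[OF assms]])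
  have q4: "norm (q^4) < 1" using assms by (simp add: norm_power power_less_one_iff)
  have "(\<lambda>n. (\<Prod>k<n. 1 - a * (q^4)^k) * (\<Prod>k<n. 1 - (a*q) * (q^4)^k)
       * (\<Prod>k<n. 1 - (a*q^2) * (q^4)^k) * (\<Prod>k<n. 1 - (a*q^3) * (q^4)^k))
     \<longlonglongrightarrow> qpoch a (q^4) * qpoch (a*q) (q^4) * qpoch (a*q^2) (q^4) * qpoch (a*q^3) (q^4)"
    by (intro tendsto_mult qpoch_lim q4)
  moreover have "\<And>k. (\<Prod>r<4. 1 - a * q ^ (4*k+r)) = (1 - a * (q^4)^k) * (1 - (a*q) * (q^4)^k)
       * (1 - (a*q^2) * (q^4)^k) * (1 - (a*q^3) * (q^4)^k)"
  proof -
    fix k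
    have "{..<4::nat} = {0,1,2,3}" by auto
    thus "(\<Prod>r<4. 1 - a * q ^ (4*k+r)) = (1 - a * (q^4)^k) * (1 - (a*q) * (q^4)^k)
       * (1 - (a*q^2) * (q^4)^k) * (1 - (a*q^3) * (q^4)^k)"
      by (simp add: power_add power_mult mult_ac pow_swap[of q 4 k])
  qed
  ultimately show "(\<lambda>n. \<Prod>k<n. \<Prod>r<4. 1 - a * q ^ (4*k+r)) \<longlonglongrightarrow> qpoch a (q^4) * qpoch (a*q) (q^4) * qpoch (a*q^2) (q^4) * qpoch (a*q^3) (q^4)"
    by (simp add: prod.distrib)
qed simp



fun gb :: "complex \<Rightarrow> nat \<Rightarrow> nat \<Rightarrow> complex" where
  "gb P 0 k = (if k = 0 then 1 else 0)"
| "gb P (Suc n) 0 = 1"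
| "gb P (Suc n) (Suc k) = gb P n k + P^(Suc k) * gb P n (Suc k)"

definition qt :: "complex \<Rightarrow> nat \<Rightarrow> complex" where
  "qt P k = (\<Prod>j<k. P^j)"

definition pp :: "complex \<Rightarrow> nat \<Rightarrow> complex" where
  "pp P n = (\<Prod>j<n. 1 - P^(Suc j))"

lemma gb_0 [simp]: "gb P n 0 = 1" by (cases n) auto

lemma gb_gt: "k > n \<Longrightarrow> gb P n k = 0"
proof (induction n arbitrary: k)
  case 0 then show ?case by simp
next
  case (Suc n)
  then obtain k' where "k = Suc k'" by (cases k) auto
  with Suc show ?case by simp
qed

lemma qt_Suc: "qt P (Suc k) = qt P k * P^k"
  by (simp add: qt_def)

lemma qbinom:
  "(\<Prod>j<n. 1 + x * P^j) = (\<Sum>k\<le>n. gb P n k * qt P k * x^k)"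
proof (induction n arbitrary: x)
  case 0 then show ?case by (simp add: qt_def)
next
  case (Suc n)
  have "(\<Prod>j<Suc n. 1 + x * P^j) = (1 + x) * (\<Prod>j<n. 1 + (x*P) * P^j)"
    by (subst prod.lessThan_Suc_shift) (simp add: mult_ac)
  also have "\<dots> = (1 + x) * (\<Sum>k\<le>n. gb P n k * qt P k * (x*P)^k)"
    using Suc by simp
  also have "\<dots> = (\<Sum>k\<le>n. gb P n k * qt P k * (x*P)^k) + (\<Sum>k\<le>n. x * (gb P n k * qt P k * (x*P)^k))"
    by (simp only: distrib_right mult_1_left sum_distrib_left sum.distrib)
  also have "\<dots> = (\<Sum>k\<le>n. gb P n k * qt P (Suc k) * x^k)
                 + (\<Sum>k\<le>n. gb P n k * qt P (Suc k) * x^(Suc k))"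
    by (simp add: qt_Suc power_mult_distrib mult_ac)
  also have "(\<Sum>k\<le>n. gb P n k * qt P (Suc k) * x^k) = (\<Sum>k\<le>Suc n. gb P n k * qt P (Suc k) * x^k)"
    by (simp add: gb_gt)
  also have "\<dots> = 1 + (\<Sum>k\<le>n. P^(Suc k) * gb P n (Suc k) * qt P (Suc k) * x^(Suc k))"
    by (subst sum.atMost_Suc_shift) (simp add: qt_Suc qt_def mult_ac)
  also have "1 + (\<Sum>k\<le>n. P^(Suc k) * gb P n (Suc k) * qt P (Suc k) * x^(Suc k))
      + (\<Sum>k\<le>n. gb P n k * qt P (Suc k) * x^(Suc k))
      = (\<Sum>k\<le>Suc n. gb P (Suc n) k * qt P k * x^k)"
    by (subst sum.atMost_Suc_shift) (simp add: algebra_simps sum.distrib qt_def)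
  finally show ?case .
qed

lemma pp_Suc: "pp P (Suc n) = pp P n * (1 - P^(Suc n))"
  by (simp add: pp_def)

lemma gb_closed: "k \<le> n \<Longrightarrow> gb P n k * pp P k * pp P (n - k) = pp P n"
proof (induction n arbitrary: k)
  case 0 then show ?case by (simp add: pp_def)
next
  case (Suc n)
  show ?case
  proof (cases k)
    case 0 then show ?thesis by (simp add: pp_def)
  next
    case (Suc k')
    have A: "gb P n k' * pp P k' * pp P (n - k') = pp P n" using Suc.IH Suc.prems Suc by simp
    have B: "P^(Suc k') * gb P n (Suc k') * pp P (Suc k') * pp P (n - k')
             = P^(Suc k') * pp P n * (1 - P^(n - k'))"
    proof (cases "Suc k' \<le> n")
      case True
      then obtain d where d: "n - k' = Suc d" by (metis Suc_diff_le diff_Suc_Suc)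
      have "gb P n (Suc k') * pp P (Suc k') * pp P (n - Suc k') = pp P n" using Suc.IH True by blast
      moreover have "n - Suc k' = d" using d by simp
      moreover have E: "pp P (n - k') = pp P d * (1 - P^(n-k'))" using d by (simp add: pp_Suc)
      ultimately have F: "gb P n (Suc k') * pp P (Suc k') * pp P d = pp P n" by simp
      have "P^(Suc k') * gb P n (Suc k') * pp P (Suc k') * pp P (n - k')
          = P^(Suc k') * (gb P n (Suc k') * pp P (Suc k') * pp P d) * (1 - P^(n-k'))"
        unfolding E by (simp only: mult_ac)
      then show ?thesis unfolding F by simp
    next
      case False
      then have "n = k'" using Suc.prems Suc by simp
      then show ?thesis by (simp add: gb_gt)
    qed
    have "gb P (Suc n) k * pp P k * pp P (Suc n - k)
        = gb P n k' * pp P k' * pp P (n - k') * (1 - P^(Suc k'))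
          + P^(Suc k') * gb P n (Suc k') * pp P (Suc k') * pp P (n - k')"
      using Suc by (simp add: pp_Suc algebra_simps)
    also have "\<dots> = pp P n * (1 - P^(Suc k')) + P^(Suc k') * pp P n * (1 - P^(n - k'))"
      using A B by simp
    also have "\<dots> = pp P n * (1 - P^(Suc n))"
      using Suc.prems Suc by (simp add: algebra_simps power_add[symmetric])
    finally show ?thesis by (simp add: pp_Suc)
  qed
qed

lemma pp_nonzero: "norm P < 1 \<Longrightarrow> pp P n \<noteq> 0"
proof -
  assume P: "norm P < 1"
  have "\<And>j. norm (P^Suc j) < 1" using P
    by (simp add: norm_power power_less_one_iff del: power_Suc)
  hence "\<And>j. 1 - P^Suc j \<noteq> 0" by (metis eq_iff_diff_eq_0 norm_one order_less_irrefl)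
  thus ?thesis by (simp add: pp_def)
qed

lemma pp_lim: "norm P < 1 \<Longrightarrow> pp P \<longlonglongrightarrow> qpoch P P"
proof -
  assume "norm P < 1"
  moreover have "pp P = (\<lambda>n. \<Prod>j<n. 1 - P * P^j)" by (simp add: pp_def fun_eq_iff)
  ultimately show ?thesis using qpoch_lim[of P P] by simp
qed

lemma gb_eq: "norm P < 1 \<Longrightarrow> k \<le> n \<Longrightarrow> gb P n k = pp P n / (pp P k * pp P (n - k))"
  using gb_closed[of k n P] pp_nonzero[of P] by (simp add: field_simps)



lemma pw: "(p::complex) \<noteq> 0 \<Longrightarrow> a + b = c + d \<Longrightarrow> p^a * (1/p)^c = p^d * (1/p)^b"
proof -
  assume p: "p \<noteq> 0" and e: "a + b = c + d"
  have "p^a * p^b = p^d * p^c" by (simp add: power_add[symmetric] e add.commute)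
  thus ?thesis using p by (simp add: field_simps power_one_over)
qed

lemma ring_aux: "(W::complex) * Pp = 1 \<Longrightarrow> z * iz = 1 \<Longrightarrow> 1 + z*W = z*W*(1 + iz*Pp)"
proof -
  assume a: "W * Pp = 1" "z * iz = 1"
  have "z*W*(1 + iz*Pp) = z*W + (z*iz)*(W*Pp)" by (simp add: algebra_simps)
  thus ?thesis using a by simp
qed

lemma qt_sq: "qt (p^2) k = p^(k*(k-1))"
proof (induction k)
  case 0 then show ?case by (simp add: qt_def)
next
  case (Suc k)
  have e: "k*(k-1) + 2*k = Suc k * k" by (cases k) (auto simp: algebra_simps)
  have "p^(k*(k-1)) * (p^2)^k = p^(k*(k-1) + 2*k)" by (simp only: power_add power_mult)
  also have "\<dots> = p^(Suc k * (Suc k - 1))" unfolding e by simp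
  finally show ?case using Suc by (simp add: qt_Suc)
qed

lemma sum_split_center:
  fixes g :: "nat \<Rightarrow> complex"
  shows "(\<Sum>k\<le>2*n. g k) = g n + (\<Sum>i<n. g (n+1+i)) + (\<Sum>i<n. g (n - Suc i))"
proof -
  have "(\<Sum>k\<le>2*n. g k) = (\<Sum>k\<in>{0..<n}. g k) + (\<Sum>k\<in>{n..<2*n+1}. g k)"
    by (simp add: atLeast0AtMost[symmetric] atLeastLessThanSuc_atLeastAtMost[symmetric] sum.atLeastLessThan_concat)
  also have "(\<Sum>k\<in>{n..<2*n+1}. g k) = g n + (\<Sum>k\<in>{Suc n..<2*n+1}. g k)"
    by (subst sum.atLeast_Suc_lessThan) auto
  also have "(\<Sum>k\<in>{Suc n..<2*n+1}. g k) = (\<Sum>i<n. g (n+1+i))"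
  proof -
    have "(\<Sum>k\<in>{Suc n..<2*n+1}. g k) = (\<Sum>k\<in>{0+(n+1)..<n+(n+1)}. g k)" by (simp add: mult_2)
    also have "\<dots> = (\<Sum>i\<in>{0..<n}. g (i + (n+1)))" by (rule sum.shift_bounds_nat_ivl)
    finally show ?thesis by (simp add: atLeast0LessThan add.commute add.left_commute)
  qed
  also have "(\<Sum>k\<in>{0..<n}. g k) = (\<Sum>i<n. g (n - Suc i))"
    by (simp add: atLeast0LessThan sum.nat_diff_reindex)
  finally show ?thesis by (simp add: algebra_simps)
qed

lemma prod_split_half:
  fixes f :: "nat \<Rightarrow> complex"
  shows "(\<Prod>j<2*n. f j) = (\<Prod>i<n. f (n - Suc i)) * (\<Prod>i<n. f (n+i))"
proof -
  have "(\<Prod>j<2*n. f j) = (\<Prod>j\<in>{0..<n}. f j) * (\<Prod>j\<in>{n..<2*n}. f j)"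
    by (simp add: atLeast0LessThan[symmetric] prod.atLeastLessThan_concat)
  also have "(\<Prod>j\<in>{n..<2*n}. f j) = (\<Prod>i<n. f (n+i))"
  proof -
    have "(\<Prod>j\<in>{n..<2*n}. f j) = (\<Prod>j\<in>{0+n..<n+n}. f j)" by (simp add: mult_2)
    also have "\<dots> = (\<Prod>i\<in>{0..<n}. f (i + n))" by (rule prod.shift_bounds_nat_ivl)
    finally show ?thesis by (simp add: atLeast0LessThan add.commute)
  qed
  also have "(\<Prod>j\<in>{0..<n}. f j) = (\<Prod>i<n. f (n - Suc i))"
    by (simp add: atLeast0LessThan prod.nat_diff_reindex)
  finally show ?thesis .
qed

lemma prod_odd_pow: "(\<Prod>i<n. (y::complex)^(2*i+1)) = y^(n^2)"
proof (induction n)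
  case 0 then show ?case by simp
next
  case (Suc n)
  have e: "n^2 + (2*n+1) = (Suc n)^2" by (simp add: power2_eq_square)
  have "(\<Prod>i<Suc n. y^(2*i+1)) = y^(n^2) * y^(2*n+1)" using Suc by simp
  also have "\<dots> = y^(n^2 + (2*n+1))" by (simp only: power_add)
  finally show ?case unfolding e .
qed

lemma gb_sym: "norm P < 1 \<Longrightarrow> k \<le> n \<Longrightarrow> gb P n (n - k) = gb P n k"
  by (simp add: gb_eq mult.commute)

lemma jtp_finite:
  fixes p z :: complex
  assumes p0: "p \<noteq> 0" and z0: "z \<noteq> 0" and p1: "norm p < 1"
  shows "(\<Prod>i<n. (1 + z*p^(2*i+1)) * (1 + (1/z)*p^(2*i+1)))
       = gb (p^2) (2*n) n + (\<Sum>i<n. gb (p^2) (2*n) (n+1+i) * p^((i+1)^2) * (z^(i+1) + (1/z)^(i+1)))"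
proof -
  define x where "x = z * p * (1/p)^(2*n)"
  define K where "K = z^n * (1/p)^(n^2)"
  have K0: "K \<noteq> 0" using p0 z0 by (simp add: K_def)
  have P1: "norm (p^2) < 1" using p1 by (simp add: norm_power power_less_one_iff)
  have Q: "(\<Prod>j<2*n. 1 + x*(p^2)^j) = (\<Sum>k\<le>2*n. gb (p^2) (2*n) k * qt (p^2) k * x^k)"
    by (rule qbinom)
  have f1: "1 + x*(p^2)^(n+i) = 1 + z*p^(2*i+1)" for i
  proof -
    have "p^(2*n+2*i+1) * (1/p)^(2*n) = p^(2*i+1) * (1/p)^0" by (rule pw[OF p0]) simp
    moreover have "x*(p^2)^(n+i) = z * (p^(2*n+2*i+1) * (1/p)^(2*n))"
      by (simp add: x_def power_mult[symmetric] power_add mult_ac)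
    ultimately show ?thesis by simp
  qed
  have f2: "1 + x*(p^2)^(n - Suc i) = z*(1/p)^(2*i+1) * (1 + (1/z)*p^(2*i+1))" if "i < n" for i
  proof -
    have "p^(2*(n - Suc i)+1) * (1/p)^(2*n) = p^0 * (1/p)^(2*i+1)" by (rule pw[OF p0]) (use that in simp)
    moreover have "x*(p^2)^(n - Suc i) = z * (p^(2*(n - Suc i)+1) * (1/p)^(2*n))"
      by (simp add: x_def power_mult[symmetric] power_add mult_ac)
    ultimately have "x*(p^2)^(n - Suc i) = z*(1/p)^(2*i+1)" by simp
    moreover have "(1/p)^(2*i+1) * p^(2*i+1) = 1" using p0 by (simp add: power_one_over)
    moreover have "z * (1/z) = 1" using z0 by simp
    ultimately show ?thesis using ring_aux by metis
  qed
  have LHS: "(\<Prod>j<2*n. 1 + x*(p^2)^j) = K * (\<Prod>i<n. (1 + z*p^(2*i+1)) * (1 + (1/z)*p^(2*i+1)))"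
  proof -
    have "(\<Prod>j<2*n. 1 + x*(p^2)^j) = (\<Prod>i<n. z*(1/p)^(2*i+1) * (1 + (1/z)*p^(2*i+1))) * (\<Prod>i<n. 1 + z*p^(2*i+1))"
      by (simp add: prod_split_half f1 f2)
    also have "\<dots> = ((\<Prod>i<n. z) * (\<Prod>i<n. (1/p)^(2*i+1)) * (\<Prod>i<n. 1 + (1/z)*p^(2*i+1))) * (\<Prod>i<n. 1 + z*p^(2*i+1))"
      by (simp only: prod.distrib)
    also have "\<dots> = (z^n * (1/p)^(n^2) * (\<Prod>i<n. 1 + (1/z)*p^(2*i+1))) * (\<Prod>i<n. 1 + z*p^(2*i+1))"
      by (simp only: prod_odd_pow prod_constant card_lessThan)
    also have "\<dots> = K * ((\<Prod>i<n. 1 + z*p^(2*i+1)) * (\<Prod>i<n. 1 + (1/z)*p^(2*i+1)))"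
      by (simp only: K_def mult.assoc mult.commute[of "\<Prod>i<n. 1 + (1/z)*p^(2*i+1)"])
    also have "\<dots> = K * (\<Prod>i<n. (1 + z*p^(2*i+1)) * (1 + (1/z)*p^(2*i+1)))"
      by (simp only: prod.distrib)
    finally show ?thesis .
  qed
  define g where "g k = gb (p^2) (2*n) k * qt (p^2) k * x^k" for k
  have gk: "g k = gb (p^2) (2*n) k * z^k * (p^(k^2) * (1/p)^(2*n*k))" for k
  proof -
    have "k*(k-1) + k = k^2" by (cases k) (auto simp: power2_eq_square)
    hence "p^(k*(k-1)) * p^k = p^(k^2)" by (simp add: power_add[symmetric])
    thus ?thesis
      by (simp add: g_def qt_sq x_def power_mult_distrib power_mult[symmetric] mult_ac)
  qed
  have g1: "g (n+1+i) = K * (gb (p^2) (2*n) (n+1+i) * p^((i+1)^2) * z^(i+1))" for i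
  proof -
    have "p^((n+1+i)^2) * (1/p)^(2*n*(n+1+i)) = p^((i+1)^2) * (1/p)^(n^2)"
      by (rule pw[OF p0]) (simp add: power2_eq_square algebra_simps)
    thus ?thesis by (simp add: gk K_def power_add mult_ac)
  qed
  have g2: "g (n - Suc i) = K * (gb (p^2) (2*n) (n+1+i) * p^((i+1)^2) * (1/z)^(i+1))" if hi: "i < n" for i
  proof -
    obtain d where "n = Suc (i + d)" using less_iff_Suc_add[THEN iffD1, OF hi] by blast
    hence d: "n = d + i + 1" by simp
    have nd: "n - Suc i = d" using d by simp
    have "p^(d^2) * (1/p)^(2*n*d) = p^((i+1)^2) * (1/p)^(n^2)"
      by (rule pw[OF p0]) (simp add: d power2_eq_square algebra_simps)
    moreover have "z^d * (1/z)^0 = z^n * (1/z)^(i+1)" by (rule pw[OF z0]) (simp add: d)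
    moreover have "gb (p^2) (2*n) d = gb (p^2) (2*n) (n+1+i)"
    proof -
      have "2*n - (n+1+i) = d" using d by simp
      thus ?thesis using gb_sym[OF P1, of "n+1+i" "2*n"] d by simp
    qed
    ultimately show ?thesis by (simp add: nd gk K_def mult_ac)
  qed
  have RHS: "(\<Sum>k\<le>2*n. g k) = K * (gb (p^2) (2*n) n + (\<Sum>i<n. gb (p^2) (2*n) (n+1+i) * p^((i+1)^2) * (z^(i+1) + (1/z)^(i+1))))"
  proof -
    have gn: "g n = K * gb (p^2) (2*n) n"
    proof -
      have "p^(n^2) * (1/p)^(2*n*n) = p^0 * (1/p)^(n^2)"
        by (rule pw[OF p0]) (simp add: power2_eq_square)
      thus ?thesis by (simp add: gk K_def mult_ac)
    qed
    have "(\<Sum>k\<le>2*n. g k) = g n + (\<Sum>i<n. g (n+1+i)) + (\<Sum>i<n. g (n - Suc i))"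
      by (rule sum_split_center)
    also have "(\<Sum>i<n. g (n - Suc i)) = (\<Sum>i<n. K * (gb (p^2) (2*n) (n+1+i) * p^((i+1)^2) * (1/z)^(i+1)))"
      by (rule sum.cong[OF refl], rule g2, simp)
    also have "(\<Sum>i<n. g (n+1+i)) = (\<Sum>i<n. K * (gb (p^2) (2*n) (n+1+i) * p^((i+1)^2) * z^(i+1)))"
      by (intro sum.cong refl g1)
    finally have S: "(\<Sum>k\<le>2*n. g k) = g n + (\<Sum>i<n. K * (gb (p^2) (2*n) (n+1+i) * p^((i+1)^2) * z^(i+1)))
       + (\<Sum>i<n. K * (gb (p^2) (2*n) (n+1+i) * p^((i+1)^2) * (1/z)^(i+1)))" .
    have T: "(\<Sum>i<n. K * (gb (p^2) (2*n) (n+1+i) * p^((i+1)^2) * (z^(i+1) + (1/z)^(i+1))))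
      = (\<Sum>i<n. K * (gb (p^2) (2*n) (n+1+i) * p^((i+1)^2) * z^(i+1)))
       + (\<Sum>i<n. K * (gb (p^2) (2*n) (n+1+i) * p^((i+1)^2) * (1/z)^(i+1)))"
      by (simp only: distrib_left sum.distrib)
    show ?thesis
      unfolding S distrib_left[of K] sum_distrib_left[symmetric] T gn by (simp only: add.assoc distrib_left sum.distrib)
  qed
  have "K * (\<Prod>i<n. (1 + z*p^(2*i+1)) * (1 + (1/z)*p^(2*i+1))) = K * (gb (p^2) (2*n) n + (\<Sum>i<n. gb (p^2) (2*n) (n+1+i) * p^((i+1)^2) * (z^(i+1) + (1/z)^(i+1))))"
    using Q LHS RHS by (simp add: g_def)
  thus ?thesis using K0 by simp
qed



lemma sumM:
  fixes a r :: real assumes "0 \<le> a" "a < 1" "0 \<le> r"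
  shows "summable (\<lambda>i. a^((i+1)^2) * r^(i+1))"
proof (rule summable_comparison_test_ev)
  have h: "(\<lambda>i. a^i) \<longlonglongrightarrow> 0" using assms by (intro LIMSEQ_power_zero) simp
  have "(\<lambda>i. a^(i+1)) \<longlonglongrightarrow> 0" using LIMSEQ_Suc[OF h] by simp
  hence "(\<lambda>i. a^(i+1) * r) \<longlonglongrightarrow> 0" by (rule tendsto_mult_left_zero)
  hence "eventually (\<lambda>i. a^(i+1) * r < 1/2) sequentially"
    by (intro order_tendstoD) auto
  thus "eventually (\<lambda>i. norm (a^((i+1)^2) * r^(i+1)) \<le> (1/2)^(i+1)) sequentially"
  proof eventually_elim
    case (elim i)
    have "a^((i+1)^2) * r^(i+1) = (a^(i+1) * r)^(i+1)"
      by (simp only: power2_eq_square power_mult power_mult_distrib)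
    moreover have "(a^(i+1) * r)^(i+1) \<le> (1/2)^(i+1)"
      using elim assms by (intro power_mono) auto
    moreover have "0 \<le> a^((i+1)^2) * r^(i+1)" using assms by simp
    ultimately show ?case unfolding real_norm_def by linarith
  qed
  show "summable (\<lambda>i. (1/2::real)^(i+1))" by (intro summable_mult2 summable_geometric[THEN summable_ignore_initial_segment]) auto
qed

lemma bounded_pos:
  fixes f :: "nat \<Rightarrow> complex" assumes "f \<longlonglongrightarrow> L"
  obtains B where "B > 0" "\<And>n. norm (f n) \<le> B"
proof -
  have "Bseq f" using assms by (intro convergent_imp_Bseq convergentI)
  thus ?thesis using that by (auto elim: BseqE)
qed

theorem jtp:
  fixes p z :: complex
  assumes p1: "norm p < 1" and p0: "p \<noteq> 0" and z0: "z \<noteq> 0"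
  shows "qpoch (p^2) (p^2) * qpoch (-(z*p)) (p^2) * qpoch (-(p/z)) (p^2)
       = 1 + (\<Sum>i. p^((i+1)^2) * (z^(i+1) + (1/z)^(i+1)))"
proof -
  define P where "P = p^2"
  define Q where "Q = qpoch P P"
  have P1: "norm P < 1" using p1 by (simp add: P_def norm_power power_less_one_iff)
  have Q0: "Q \<noteq> 0" unfolding Q_def by (rule qpoch_nonzero[OF P1 P1])
  have ppl: "pp P \<longlonglongrightarrow> Q" unfolding Q_def by (rule pp_lim[OF P1])
  have ppn: "\<And>n. pp P n \<noteq> 0" by (rule pp_nonzero[OF P1])
  have ippl: "(\<lambda>n. 1 / pp P n) \<longlonglongrightarrow> 1 / Q" using ppl Q0 by (intro tendsto_divide tendsto_const) auto
  obtain B1 where B1: "B1 > 0" "\<And>n. norm (pp P n) \<le> B1" using bounded_pos[OF ppl] by blast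
  obtain B2 where B2: "B2 > 0" "\<And>n. norm (1 / pp P n) \<le> B2" using bounded_pos[OF ippl] by blast
  define C where "C = B1 * B2 * B2"
  have C0: "0 \<le> C" using B1 B2 by (simp add: C_def)
  have gbB: "norm (gb P N k) \<le> C" if "k \<le> N" for N k
  proof -
    have "gb P N k = pp P N * (1 / pp P k) * (1 / pp P (N - k))"
      using gb_eq[OF P1 that] by simp
    hence "norm (gb P N k) = norm (pp P N) * norm (1 / pp P k) * norm (1 / pp P (N - k))"
      by (simp only: norm_mult)
    also have "\<dots> \<le> B1 * B2 * B2"
      using B1 B2 by (intro mult_mono) (auto intro: mult_nonneg_nonneg)
    finally show ?thesis by (simp add: C_def)
  qed
  define c where "c i = p^((i+1)^2) * (z^(i+1) + (1/z)^(i+1))" for i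
  define M0 where "M0 i = norm p^((i+1)^2) * norm z^(i+1) + norm p^((i+1)^2) * norm (1/z)^(i+1)" for i
  have cM: "norm (c i) \<le> M0 i" for i
  proof -
    have "norm (c i) = norm p^((i+1)^2) * norm (z^(i+1) + (1/z)^(i+1))"
      by (simp add: c_def norm_mult norm_power)
    also have "\<dots> \<le> norm p^((i+1)^2) * (norm z^(i+1) + norm (1/z)^(i+1))"
    proof (rule mult_left_mono)
      show "norm (z^(i+1) + (1/z)^(i+1)) \<le> norm z^(i+1) + norm (1/z)^(i+1)"
        by (metis norm_triangle_ineq norm_power)
    qed simp
    finally show ?thesis by (simp add: M0_def algebra_simps)
  qed
  have M0s: "summable M0" unfolding M0_def
    using p1 by (intro summable_add sumM) auto
  have cs: "summable c"
    by (rule summable_comparison_test[OF _ M0s]) (use cM in auto)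
  define a where "a i n = (if i < n then gb P (2*n) (n+1+i) * c i else 0)" for i n
  have fin: "(\<Prod>i<n. (1 + z*p^(2*i+1)) * (1 + (1/z)*p^(2*i+1))) = gb P (2*n) n + (\<Sum>i. a i n)" for n
  proof -
    have "(\<Sum>i. a i n) = (\<Sum>i<n. a i n)" by (rule suminf_finite) (auto simp: a_def)
    also have "\<dots> = (\<Sum>i<n. gb P (2*n) (n+1+i) * c i)" by (simp add: a_def)
    finally show ?thesis using jtp_finite[OF p0 z0 p1, of n] by (simp add: P_def c_def mult_ac)
  qed
  have lim2: "(\<lambda>n. pp P (2*n)) \<longlonglongrightarrow> Q"
    by (rule filterlim_compose[OF ppl]) (intro filterlim_subseq strict_monoI, simp)
  have limp: "(\<lambda>n. pp P (n + j)) \<longlonglongrightarrow> Q" for j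
    by (rule filterlim_compose[OF ppl]) (rule filterlim_add_const_nat_at_top)
  have limm: "(\<lambda>n. pp P (n - j)) \<longlonglongrightarrow> Q" for j
    by (rule filterlim_compose[OF ppl]) (rule filterlim_minus_const_nat_at_top)
  have alim: "(\<lambda>n. a i n) \<longlonglongrightarrow> c i / Q" for i
  proof -
    have L1: "(\<lambda>n. pp P (2*n) / (pp P (n + (1+i)) * pp P (n - (1+i))) * c i) \<longlonglongrightarrow> Q / (Q * Q) * c i"
      using Q0 by (intro tendsto_intros lim2 limp limm) auto
    have L2: "Q / (Q * Q) * c i = c i / Q" using Q0 by (simp add: field_simps)
    have L3: "eventually (\<lambda>n. pp P (2*n) / (pp P (n + (1+i)) * pp P (n - (1+i))) * c i = a i n) sequentially"
      using eventually_gt_at_top[of i]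
    proof eventually_elim
      case (elim n)
      have "2*n - (n+1+i) = n - (1+i)" by simp
      thus ?case using elim gb_eq[OF P1, of "n+1+i" "2*n"] by (simp add: a_def add.assoc)
    qed
    show ?thesis using Lim_transform_eventually[OF L1[unfolded L2] L3] .
  qed
  have tann: "(\<lambda>n. \<Sum>i. a i n) \<longlonglongrightarrow> (\<Sum>i. c i / Q)"
  proof -
    have "eventually (\<lambda>(i,n). norm (a i n) \<le> C * M0 i) (at_top \<times>\<^sub>F sequentially)"
    proof (rule always_eventually, clarify)
      fix i n
      show "norm (a i n) \<le> C * M0 i"
      proof (cases "i < n")
        case True
        hence "norm (a i n) = norm (gb P (2*n) (n+1+i)) * norm (c i)" by (simp add: a_def norm_mult)
        also have "\<dots> \<le> C * M0 i"
          using True gbB[of "n+1+i" "2*n"] cM[of i] C0 by (intro mult_mono) auto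
        finally show ?thesis .
      next
        case False
        have "0 \<le> C" using B1 B2 by (simp add: C_def)
        moreover have "0 \<le> M0 i" by (simp add: M0_def)
        ultimately show ?thesis using False by (simp add: a_def)
      qed
    qed
    moreover have "summable (\<lambda>i. C * M0 i)" by (intro summable_mult M0s)
    ultimately show ?thesis
      using tannerys_theorem[of a "\<lambda>i. c i / Q" sequentially "\<lambda>i. C * M0 i"] alim by auto
  qed
  have gbn: "(\<lambda>n. gb P (2*n) n) \<longlonglongrightarrow> Q / (Q * Q)"
  proof -
    have "(\<lambda>n. pp P (2*n) / (pp P (n + 0) * pp P (n - 0))) \<longlonglongrightarrow> Q / (Q * Q)"
      using Q0 by (intro tendsto_intros lim2 limp limm) auto
    moreover have "pp P (2*n) / (pp P (n + 0) * pp P (n - 0)) = gb P (2*n) n" for n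
      using gb_eq[OF P1, of n "2*n"] by simp
    ultimately show ?thesis by simp
  qed
  have Llim: "(\<lambda>n. \<Prod>i<n. (1 + z*p^(2*i+1)) * (1 + (1/z)*p^(2*i+1)))
      \<longlonglongrightarrow> qpoch (-(z*p)) P * qpoch (-(p/z)) P"
  proof -
    have "(\<lambda>n. (\<Prod>i<n. 1 - (-(z*p)) * P^i) * (\<Prod>i<n. 1 - (-(p/z)) * P^i))
      \<longlonglongrightarrow> qpoch (-(z*p)) P * qpoch (-(p/z)) P"
      by (intro tendsto_mult qpoch_lim P1)
    moreover have "(\<Prod>i<n. 1 - (-(z*p)) * P^i) * (\<Prod>i<n. 1 - (-(p/z)) * P^i)
        = (\<Prod>i<n. (1 + z*p^(2*i+1)) * (1 + (1/z)*p^(2*i+1)))" for n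
      by (simp add: prod.distrib P_def power_mult[symmetric] mult_ac)
    ultimately show ?thesis by simp
  qed
  have "(\<lambda>n. \<Prod>i<n. (1 + z*p^(2*i+1)) * (1 + (1/z)*p^(2*i+1))) \<longlonglongrightarrow> Q / (Q * Q) + (\<Sum>i. c i / Q)"
    unfolding fin by (intro tendsto_add gbn tann)
  hence "qpoch (-(z*p)) P * qpoch (-(p/z)) P = Q / (Q * Q) + (\<Sum>i. c i / Q)"
    using Llim LIMSEQ_unique by blast
  also have "\<dots> = (1 + (\<Sum>i. c i)) / Q"
    using Q0 by (simp add: suminf_divide[OF cs] field_simps)
  finally have "Q * (qpoch (-(z*p)) P * qpoch (-(p/z)) P) = 1 + (\<Sum>i. c i)"
    using Q0 by (simp add: field_simps)
  thus ?thesis by (simp add: Q_def P_def c_def mult.assoc)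
qed



fun tri :: "nat \<Rightarrow> nat" where
  "tri 0 = 0" | "tri (Suc j) = tri j + Suc j"

lemma tri2: "2 * tri j = j * (j + 1)"
  by (induction j) (auto simp: algebra_simps)

lemma tri_ge: "j \<le> tri j"
  by (induction j) auto

lemma sum2: "sum f {m..<m+2} = f m + f (Suc m)"
  by (simp add: eval_nat_numeral)

lemma sum4: "sum f {m..<m+4} = f m + f (Suc m) + f (Suc (Suc m)) + f (Suc (Suc (Suc m)))"
  by (simp add: eval_nat_numeral)

lemma pw': "(q::complex) \<noteq> 0 \<Longrightarrow> a = c + d \<Longrightarrow> q^a * (1/q)^c = q^d"
  using pw[of q a 0 c d] by simp

lemma series_part:
  fixes q :: complex
  assumes q1: "norm q < 1" and q0: "q \<noteq> 0"
  shows "(1 + (\<Sum>i. (q^8)^((i+1)^2) * ((1/q^2)^(i+1) + (1/(1/q^2))^(i+1))))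
       + q * (1 + (\<Sum>i. (q^8)^((i+1)^2) * ((q^6)^(i+1) + (1/q^6)^(i+1))))
       = 1 + (\<Sum>i. (q^2)^((i+1)^2) * ((1/q)^(i+1) + (1/(1/q))^(i+1)))"
proof -
  define t where "t j = q^(tri j)" for j
  have ts: "summable t"
  proof (rule summable_comparison_test[of _ "\<lambda>j. norm q ^ j"])
    show "\<exists>N. \<forall>n\<ge>N. norm (t n) \<le> norm q ^ n"
      using q1 tri_ge by (auto simp: t_def norm_power intro!: power_decreasing)
    show "summable (\<lambda>j. norm q ^ j)" using q1 by simp
  qed
  define s where "s = suminf t"
  have tsum: "t sums s" using ts by (simp add: s_def summable_sums)
  have t0: "t 0 = 1" and t1: "t 1 = q" by (simp_all add: t_def)
  have e1: "(q^2)^((i+1)^2) * ((1/q)^(i+1) + (1/(1/q))^(i+1)) = t (2*i+1) + t (2*i+2)" for i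
  proof -
    have a: "q^(2*(i+1)^2) * (1/q)^(i+1) = q^(tri (2*i+1))"
      by (rule pw'[OF q0]) (use tri2[of "2*i+1"] in \<open>simp add: algebra_simps power2_eq_square\<close>)
    have b: "q^(2*(i+1)^2) * q^(i+1) = q^(tri (2*i+2))"
    proof -
      have e: "2*(i+1)^2 + (i+1) = tri (2*i+2)" using tri2[of "2*i+2"] by (simp add: algebra_simps power2_eq_square)
      have "q^(2*(i+1)^2) * q^(i+1) = q^(2*(i+1)^2 + (i+1))" by (simp only: power_add)
      thus ?thesis unfolding e .
    qed
    show ?thesis using a b by (simp add: t_def power_mult[symmetric] distrib_left)
  qed
  have e2: "(q^8)^((i+1)^2) * ((1/q^2)^(i+1) + (1/(1/q^2))^(i+1)) = t (4*i+3) + t (4*i+4)" for i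
  proof -
    have a: "q^(8*(i+1)^2) * (1/q)^(2*(i+1)) = q^(tri (4*i+3))"
      by (rule pw'[OF q0]) (use tri2[of "4*i+3"] in \<open>simp add: algebra_simps power2_eq_square\<close>)
    have b: "q^(8*(i+1)^2) * q^(2*(i+1)) = q^(tri (4*i+4))"
    proof -
      have e: "8*(i+1)^2 + 2*(i+1) = tri (4*i+4)" using tri2[of "4*i+4"] by (simp add: algebra_simps power2_eq_square)
      have "q^(8*(i+1)^2) * q^(2*(i+1)) = q^(8*(i+1)^2 + 2*(i+1))" by (simp only: power_add)
      thus ?thesis unfolding e .
    qed
    have c: "(1/q^2)^(i+1) = (1/q)^(2*(i+1))" by (simp add: power_mult power_one_over power2_eq_square)
    have d: "(1/(1/q^2))^(i+1) = q^(2*(i+1))" by (simp add: power_mult power2_eq_square)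
    show ?thesis using a b unfolding c d by (simp add: t_def power_mult[symmetric] distrib_left)
  qed
  have e3: "q * ((q^8)^((i+1)^2) * ((q^6)^(i+1) + (1/q^6)^(i+1))) = t (4*i+5) + t (4*i+2)" for i
  proof -
    have a: "q^(1 + 8*(i+1)^2) * (1/q)^(6*(i+1)) = q^(tri (4*i+2))"
      by (rule pw'[OF q0]) (use tri2[of "4*i+2"] in \<open>simp add: algebra_simps power2_eq_square\<close>)
    have b: "q^(1 + 8*(i+1)^2) * q^(6*(i+1)) = q^(tri (4*i+5))"
    proof -
      have e: "(1 + 8*(i+1)^2) + 6*(i+1) = tri (4*i+5)" using tri2[of "4*i+5"] by (simp add: algebra_simps power2_eq_square)
      have "q^(1 + 8*(i+1)^2) * q^(6*(i+1)) = q^((1 + 8*(i+1)^2) + 6*(i+1))" by (simp only: power_add)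
      thus ?thesis unfolding e .
    qed
    have c: "(1/q^6)^(i+1) = (1/q)^(6*(i+1))" by (simp only: power_mult power_one_over)
    have d: "(q^6)^(i+1) = q^(6*(i+1))" by (simp only: power_mult)
    have f: "q * (q^8)^((i+1)^2) = q^(1 + 8*(i+1)^2)" by (simp add: power_mult)
    have "q * ((q^8)^((i+1)^2) * ((q^6)^(i+1) + (1/q^6)^(i+1)))
        = q^(1 + 8*(i+1)^2) * q^(6*(i+1)) + q^(1 + 8*(i+1)^2) * (1/q)^(6*(i+1))"
      unfolding c d f[symmetric] by (simp only: distrib_left mult.assoc)
    thus ?thesis unfolding a b t_def by (simp only: add.commute)
  qed
  have sh1: "(\<lambda>n. t (n + 1)) sums (s - t 0)"
    using tsum sums_iff_shift[of t 1 "s - t 0"] by simp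
  have sh2: "(\<lambda>n. t (n + 2)) sums (s - t 0 - t 1)"
    using tsum sums_iff_shift[of t 2 "s - t 0 - t 1"] by (simp add: eval_nat_numeral)
  have g1: "(\<lambda>i. t (2*i+1) + t (2*i+2)) sums (s - 1)"
  proof -
    have "(\<lambda>n. sum (\<lambda>n. t (n+1)) {n*2..<n*2+2}) sums (s - t 0)" by (rule sums_group[OF sh1]) simp
    moreover have "sum (\<lambda>n. t (n+1)) {n*2..<n*2+2} = t (2*n+1) + t (2*n+2)" for n
      by (subst sum2) (simp add: algebra_simps)
    ultimately show ?thesis using t0 by simp
  qed
  have g2: "(\<lambda>i. (t (4*i+3) + t (4*i+4)) + (t (4*i+5) + t (4*i+2))) sums (s - 1 - q)"
  proof -
    have "(\<lambda>n. sum (\<lambda>n. t (n+2)) {n*4..<n*4+4}) sums (s - t 0 - t 1)" by (rule sums_group[OF sh2]) simp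
    moreover have "sum (\<lambda>n. t (n+2)) {n*4..<n*4+4} = (t (4*n+3) + t (4*n+4)) + (t (4*n+5) + t (4*n+2))" for n
      by (subst sum4) (simp add: algebra_simps eval_nat_numeral)
    ultimately show ?thesis using t0 t1 by (simp add: algebra_simps)
  qed
  have tsub: "summable (\<lambda>i. t (f i))" if "\<And>i. i \<le> f i" for f
  proof (rule summable_comparison_test[of _ "\<lambda>j. norm q ^ j"])
    show "\<exists>N. \<forall>n\<ge>N. norm (t (f n)) \<le> norm q ^ n"
      using q1 tri_ge that by (auto simp: t_def norm_power intro!: power_decreasing order.trans[OF _ tri_ge])
    show "summable (\<lambda>j. norm q ^ j)" using q1 by simp
  qed
  have s2: "summable (\<lambda>i. t (4*i+3) + t (4*i+4))"
    by (intro summable_add tsub) auto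
  have s3: "summable (\<lambda>i. t (4*i+5) + t (4*i+2))"
    by (intro summable_add tsub) auto
  define U where "U i = (q^8)^((i+1)^2) * ((q^6)^(i+1) + (1/q^6)^(i+1))" for i
  have Us: "summable U"
  proof -
    have "summable (\<lambda>i. q * U i)" using s3 e3 by (simp add: U_def)
    thus ?thesis using q0 by simp
  qed
  have L: "(1 + (\<Sum>i. (q^8)^((i+1)^2) * ((1/q^2)^(i+1) + (1/(1/q^2))^(i+1))))
       + q * (1 + (\<Sum>i. U i)) = s"
  proof -
    have "q * (1 + (\<Sum>i. U i)) = q + (\<Sum>i. q * U i)"
      using suminf_mult[OF Us, of q] by (simp add: distrib_left)
    also have "(\<Sum>i. q * U i) = (\<Sum>i. t (4*i+5) + t (4*i+2))" using e3 by (simp add: U_def)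
    finally have A: "q * (1 + (\<Sum>i. U i)) = q + (\<Sum>i. t (4*i+5) + t (4*i+2))" .
    have B: "(\<Sum>i. (q^8)^((i+1)^2) * ((1/q^2)^(i+1) + (1/(1/q^2))^(i+1))) = (\<Sum>i. t (4*i+3) + t (4*i+4))"
      using e2 by simp
    have C: "(\<Sum>i. t (4*i+3) + t (4*i+4)) + (\<Sum>i. t (4*i+5) + t (4*i+2)) = s - 1 - q"
      using suminf_add[OF s2 s3] sums_unique[OF g2] by simp
    show ?thesis unfolding A B using C by (simp add: algebra_simps)
  qed
  have R: "1 + (\<Sum>i. (q^2)^((i+1)^2) * ((1/q)^(i+1) + (1/(1/q))^(i+1))) = s"
  proof -
    have "(\<Sum>i. (q^2)^((i+1)^2) * ((1/q)^(i+1) + (1/(1/q))^(i+1))) = (\<Sum>i. t (2*i+1) + t (2*i+2))"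
      using e1 by simp
    thus ?thesis using sums_unique[OF g1] by (simp add: algebra_simps)
  qed
  show ?thesis using L R by (simp add: U_def)
qed



theorem theorem1:
  fixes q :: complex
  assumes "norm q < 1"
  shows "qpoch (- q) (q ^ 2) / (qpoch (q ^ 4) (q ^ 4) * (qpoch (- (q ^ 2)) (q ^ 4)) ^ 2)
         = Fdis 0 (- (q ^ 2)) + q * Fdis 1 (- (q ^ 2))"
proof (cases "q = 0")
  case True
  then show ?thesis by (simp add: qpoch_def Fdis_def)
next
  case False
  note q0 = False
  have q1: "norm q < 1" by fact
  have nq: "\<And>n. n > 0 \<Longrightarrow> norm (q^n) < 1" using q1 by (simp add: norm_power power_less_one_iff)
  have nmq: "\<And>n. n > 0 \<Longrightarrow> norm (-(q^n)) < 1" using nq by simp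
  define A where "A = qpoch (- q) (q ^ 2)"
  define B where "B = qpoch (q ^ 4) (q ^ 4)"
  define C where "C = qpoch (- (q ^ 2)) (q ^ 4)"
  define D0 where "D0 = qpoch (- (q ^ 2)) (q ^ 16)"
  define D0' where "D0' = qpoch (- (q ^ 14)) (q ^ 16)"
  define D1 where "D1 = qpoch (- (q ^ 6)) (q ^ 16)"
  define D1' where "D1' = qpoch (- (q ^ 10)) (q ^ 16)"
  define E2 where "E2 = qpoch (q ^ 4) (q ^ 16)"
  define E4 where "E4 = qpoch (q ^ 8) (q ^ 16)"
  define E6 where "E6 = qpoch (q ^ 12) (q ^ 16)"
  define S where "S = qpoch (q ^ 16) (q ^ 16)"
  have nz: "B \<noteq> 0" "C \<noteq> 0" "D0 \<noteq> 0" "D0' \<noteq> 0" "D1 \<noteq> 0" "D1' \<noteq> 0" "E2 \<noteq> 0" "E4 \<noteq> 0" "E6 \<noteq> 0" "S \<noteq> 0"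
    unfolding B_def C_def D0_def D0'_def D1_def D1'_def E2_def E4_def E6_def S_def
    by (intro qpoch_nonzero nq nmq; simp)+
  have xx: "qpoch (- (q^2)) (- (q^2)) = C * B"
  proof -
    have "qpoch (- (q^2)) (- (q^2)) = qpoch (- (q^2)) ((- (q^2))^2) * qpoch (- (q^2) * - (q^2)) ((- (q^2))^2)"
      by (rule qpoch_split2) (use nmq[of 2] in simp)
    moreover have "(- (q^2))^2 = q^4" "- (q^2) * - (q^2) = q^4" by (simp_all add: eval_nat_numeral)
    ultimately show ?thesis by (simp add: B_def C_def)
  qed
  have BE: "B = E2 * E4 * E6 * S"
  proof -
    have "B = qpoch (q^4) ((q^4)^4) * qpoch (q^4 * q^4) ((q^4)^4) * qpoch (q^4 * (q^4)^2) ((q^4)^4) * qpoch (q^4 * (q^4)^3) ((q^4)^4)"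
      unfolding B_def by (rule qpoch_split4) (use nq[of 4] in simp)
    moreover have "(q^4)^4 = q^16" "q^4 * q^4 = q^8" "q^4 * (q^4)^2 = q^12" "q^4 * (q^4)^3 = q^16"
      by (simp_all add: power_mult[symmetric] power_add[symmetric])
    ultimately show ?thesis by (simp add: E2_def E4_def E6_def S_def)
  qed
  have CD: "C = D0 * D1 * D1' * D0'"
  proof -
    have "C = qpoch (-(q^2)) ((q^4)^4) * qpoch (-(q^2) * q^4) ((q^4)^4) * qpoch (-(q^2) * (q^4)^2) ((q^4)^4) * qpoch (-(q^2) * (q^4)^3) ((q^4)^4)"
      unfolding C_def by (rule qpoch_split4) (use nq[of 4] in simp)
    moreover have "(q^4)^4 = q^16" "-(q^2) * q^4 = -(q^6)" "-(q^2) * (q^4)^2 = -(q^10)" "-(q^2) * (q^4)^3 = -(q^14)"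
      by (simp_all add: power_mult[symmetric] power_add[symmetric])
    ultimately show ?thesis by (simp add: D0_def D0'_def D1_def D1'_def)
  qed
  have Asp: "A = qpoch (-q) (q^4) * qpoch (-(q^3)) (q^4)"
  proof -
    have "A = qpoch (-q) ((q^2)^2) * qpoch (-q * q^2) ((q^2)^2)"
      unfolding A_def by (rule qpoch_split2) (use nq[of 2] in simp)
    moreover have "(q^2)^2 = q^4" "-q * q^2 = -(q^3)"
      by (simp_all add: eval_nat_numeral)
    ultimately show ?thesis by simp
  qed
  have J1: "A * B = 1 + (\<Sum>i. (q^2)^((i+1)^2) * ((1/q)^(i+1) + (1/(1/q))^(i+1)))"
  proof -
    have "qpoch ((q^2)^2) ((q^2)^2) * qpoch (-((1/q)*q^2)) ((q^2)^2) * qpoch (-(q^2/(1/q))) ((q^2)^2)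
       = 1 + (\<Sum>i. (q^2)^((i+1)^2) * ((1/q)^(i+1) + (1/(1/q))^(i+1)))"
      by (rule jtp) (use nq[of 2] q0 in auto)
    moreover have "(q^2)^2 = q^4" "(1/q)*q^2 = q" "q^2/(1/q) = q^3"
      using q0 by (simp_all add: eval_nat_numeral)
    ultimately show ?thesis by (simp add: Asp B_def mult_ac)
  qed
  have J2: "S * D1 * D1' = 1 + (\<Sum>i. (q^8)^((i+1)^2) * ((1/q^2)^(i+1) + (1/(1/q^2))^(i+1)))"
  proof -
    have "qpoch ((q^8)^2) ((q^8)^2) * qpoch (-((1/q^2)*q^8)) ((q^8)^2) * qpoch (-(q^8/(1/q^2))) ((q^8)^2)
       = 1 + (\<Sum>i. (q^8)^((i+1)^2) * ((1/q^2)^(i+1) + (1/(1/q^2))^(i+1)))"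
      by (rule jtp) (use nq[of 8] q0 in auto)
    moreover have "(q^8)^2 = q^16" "(1/q^2)*q^8 = q^6" "q^8/(1/q^2) = q^10"
      using q0 by (simp_all add: power_mult[symmetric] field_simps power_add[symmetric])
    ultimately show ?thesis by (simp add: S_def D1_def D1'_def)
  qed
  have J3: "S * D0' * D0 = 1 + (\<Sum>i. (q^8)^((i+1)^2) * ((q^6)^(i+1) + (1/q^6)^(i+1)))"
  proof -
    have "qpoch ((q^8)^2) ((q^8)^2) * qpoch (-(q^6*q^8)) ((q^8)^2) * qpoch (-(q^8/q^6)) ((q^8)^2)
       = 1 + (\<Sum>i. (q^8)^((i+1)^2) * ((q^6)^(i+1) + (1/q^6)^(i+1)))"
      using jtp[of "q^8" "q^6"] nq[of 8] q0 by simp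
    moreover have "(q^8)^2 = q^16" "q^6*q^8 = q^14" "q^8/q^6 = q^2"
      using q0 by (simp_all add: power_mult[symmetric] field_simps power_add[symmetric])
    ultimately show ?thesis by (simp add: S_def D0_def D0'_def)
  qed
  have key: "S * D1 * D1' + q * (S * D0' * D0) = A * B"
    unfolding J1 J2 J3 by (rule series_part[OF q1 q0])
  have F0: "Fdis 0 (- (q ^ 2)) = 1 / (C * B) * (1 / (D0 * E2 * E4 * E6 * D0'))"
  proof -
    have "(- (q^2))^(1 + 2*0) = -(q^2)" "(- (q^2))^8 = q^16" "(- (q^2))^2 = q^4" "(- (q^2))^4 = q^8"
         "(- (q^2))^6 = q^12" "(- (q^2))^(7 - 2*0) = -(q^14)"
      by (simp_all add: power_mult[symmetric])
    thus ?thesis unfolding Fdis_def xx by (simp add: D0_def D0'_def E2_def E4_def E6_def)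
  qed
  have F1: "Fdis 1 (- (q ^ 2)) = 1 / (C * B) * (1 / (D1 * E2 * E4 * E6 * D1'))"
  proof -
    have "(- (q^2))^(1 + 2*1) = -(q^6)" "(- (q^2))^8 = q^16" "(- (q^2))^2 = q^4" "(- (q^2))^4 = q^8"
         "(- (q^2))^6 = q^12" "(- (q^2))^(7 - 2*1) = -(q^10)"
      by (simp_all add: power_mult[symmetric])
    thus ?thesis unfolding Fdis_def xx by (simp add: D1_def D1'_def E2_def E4_def E6_def)
  qed
  have Aeq: "A = (S * D1 * D1' + q * (S * D0' * D0)) / B" using key nz by (simp add: field_simps)
  show ?thesis
    unfolding F0 F1 A_def[symmetric] B_def[symmetric] C_def[symmetric] Aeq
    unfolding BE CD using nz by (simp add: field_simps power2_eq_square)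
qed

end
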